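(* Let $G$ be a completable graph and let $A(G)$ and $B(G)$ be $G$-partial positive definite matrices. Then $$\mathfrak{p}^+[A(G)-B(G)]\subset\mathfrak{p}^+[A(G)]-\mathfrak{p}^+[B(G)]:=\{M-N: M\in\mathfrak{p}^+[A(G)],\ N\in\mathfrak{p}^+[B(G)]\}.$$
   Context: A graph $G=(V,E)$ is a finite undirected graph on $V=\{1,\dots,n\}$ containing all loops. A $G$-partial matrix has entries specified exactly for $\{i,j\}\in E$; a completion is an $n\times n$ matrix agreeing with it on $E$. Differences of $G$-partial matrices are taken entrywise on $E$. A $G$-partial matrix $[a_{ij}]_G$ is partial positive definite if $a_{ji}=\overline{a_{ij}}$ on $E$ and every principal submatrix indexed by a clique of $G$ is positive definite. $G$ is completable if every $G$-partial positive semidefinite matrix has a positive semidefinite completion (equivalently $G$ is chordal). $\mathfrak{p}^+[A(G)]$ denotes the set of positive definite completions of $A(G)$. *)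

theory Defs
  imports Complex_Main "Jordan_Normal_Form.Matrix"
begin

text \<open>A partial matrix is a function
a :: nat => nat => complex whose entries only matter on E.\<close>

definition graph_on :: "nat \<Rightarrow> (nat \<times> nat) set \<Rightarrow> bool" where
  "graph_on n E \<longleftrightarrow> E \<subseteq> {..<n} \<times> {..<n} \<and> sym E \<and> (\<forall>i<n. (i, i) \<in> E)"

definition clique :: "nat \<Rightarrow> (nat \<times> nat) set \<Rightarrow> nat set \<Rightarrow> bool" where
  "clique n E K \<longleftrightarrow> K \<subseteq> {..<n} \<and> K \<times> K \<subseteq> E"

definition quad_form :: "nat set \<Rightarrow> (nat \<Rightarrow> nat \<Rightarrow> complex) \<Rightarrow> (nat \<Rightarrow> complex) \<Rightarrow> complex" where
  "quad_form K a x = (\<Sum>i\<in>K. \<Sum>j\<in>K. cnj (x i) * a i j * x j)"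

definition pd_on :: "nat set \<Rightarrow> (nat \<Rightarrow> nat \<Rightarrow> complex) \<Rightarrow> bool" where
  "pd_on K a \<longleftrightarrow> (\<forall>i\<in>K. \<forall>j\<in>K. a j i = cnj (a i j)) \<and>
     (\<forall>x. (\<exists>i\<in>K. x i \<noteq> 0) \<longrightarrow> 0 < Re (quad_form K a x))"

definition psd_on :: "nat set \<Rightarrow> (nat \<Rightarrow> nat \<Rightarrow> complex) \<Rightarrow> bool" where
  "psd_on K a \<longleftrightarrow> (\<forall>i\<in>K. \<forall>j\<in>K. a j i = cnj (a i j)) \<and>
     (\<forall>x. 0 \<le> Re (quad_form K a x))"

definition partial_pd :: "nat \<Rightarrow> (nat \<times> nat) set \<Rightarrow> (nat \<Rightarrow> nat \<Rightarrow> complex) \<Rightarrow> bool" where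
  "partial_pd n E a \<longleftrightarrow> (\<forall>(i, j)\<in>E. a j i = cnj (a i j)) \<and> (\<forall>K. clique n E K \<longrightarrow> pd_on K a)"

definition partial_psd :: "nat \<Rightarrow> (nat \<times> nat) set \<Rightarrow> (nat \<Rightarrow> nat \<Rightarrow> complex) \<Rightarrow> bool" where
  "partial_psd n E a \<longleftrightarrow> (\<forall>(i, j)\<in>E. a j i = cnj (a i j)) \<and> (\<forall>K. clique n E K \<longrightarrow> psd_on K a)"

definition completions :: "nat \<Rightarrow> (nat \<times> nat) set \<Rightarrow> (nat \<Rightarrow> nat \<Rightarrow> complex) \<Rightarrow> complex mat set" where
  "completions n E a = {M \<in> carrier_mat n n. \<forall>(i, j)\<in>E. M $$ (i, j) = a i j}"

definition pos_def_mat :: "complex mat \<Rightarrow> bool" where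
  "pos_def_mat M \<longleftrightarrow> dim_row M = dim_col M \<and> pd_on {..<dim_row M} (\<lambda>i j. M $$ (i, j))"

definition pos_semidef_mat :: "complex mat \<Rightarrow> bool" where
  "pos_semidef_mat M \<longleftrightarrow> dim_row M = dim_col M \<and> psd_on {..<dim_row M} (\<lambda>i j. M $$ (i, j))"

definition pd_completions :: "nat \<Rightarrow> (nat \<times> nat) set \<Rightarrow> (nat \<Rightarrow> nat \<Rightarrow> complex) \<Rightarrow> complex mat set" where
  "pd_completions n E a = {M \<in> completions n E a. pos_def_mat M}"

definition completable :: "nat \<Rightarrow> (nat \<times> nat) set \<Rightarrow> bool" where
  "completable n E \<longleftrightarrow> (\<forall>a. partial_psd n E a \<longrightarrow> (\<exists>M\<in>completions n E a. pos_semidef_mat M))"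

end

theory Submission
  imports Defs "HOL-Analysis.Function_Topology" "HOL-Analysis.Topology_Euclidean_Space"
begin

lemma compact_ball_fun: "compact (PiE (UNIV::nat set) (\<lambda>_. cball (0::complex) 1))"
proof -
  have "compactin (product_topology (\<lambda>_. euclidean) UNIV) (PiE (UNIV::nat set) (\<lambda>_. cball (0::complex) 1))"
    by (simp add: compactin_PiE compact_cball)
  then show ?thesis by (simp add: euclidean_product_topology compactin_euclidean_iff)
qed

lemma cont_quad: "continuous_on UNIV (\<lambda>x. Re (quad_form K a x))"
  unfolding quad_form_def
  by (intro continuous_intros continuous_on_product_coordinates)

lemma cont_norm: "continuous_on UNIV (\<lambda>x::nat\<Rightarrow>complex. (\<Sum>i\<in>K. (cmod (x i))\<^sup>2))"
  by (intro continuous_intros continuous_on_product_coordinates)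

lemma quad_zero:
  assumes "\<forall>i\<in>K. x i = 0" shows "quad_form K a x = 0"
  using assms by (simp add: quad_form_def)

lemma quad_scale:
  fixes r :: real
  shows "quad_form K a (\<lambda>i. x i / of_real r) = quad_form K a x / of_real (r^2)"
  unfolding quad_form_def
  by (simp add: sum_divide_distrib power2_eq_square field_simps)

lemma quad_cong:
  assumes "\<forall>i\<in>K. x i = y i" shows "quad_form K a x = quad_form K a y"
  using assms by (simp add: quad_form_def)

lemma psd_herm: "psd_on K a \<Longrightarrow> i \<in> K \<Longrightarrow> j \<in> K \<Longrightarrow> a j i = cnj (a i j)"
  unfolding psd_on_def by blast
lemma psd_nonneg: "psd_on K a \<Longrightarrow> 0 \<le> Re (quad_form K a x)"
  unfolding psd_on_def by blast
lemma pd_herm: "pd_on K a \<Longrightarrow> i \<in> K \<Longrightarrow> j \<in> K \<Longrightarrow> a j i = cnj (a i j)"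
  unfolding pd_on_def by blast
lemma pd_pos: "pd_on K a \<Longrightarrow> \<exists>i\<in>K. x i \<noteq> 0 \<Longrightarrow> 0 < Re (quad_form K a x)"
  unfolding pd_on_def by blast
lemma psd_mat: "M \<in> carrier_mat n n \<Longrightarrow> pos_semidef_mat M \<Longrightarrow> psd_on {..<n} (\<lambda>i j. M $$ (i, j))"
  unfolding pos_semidef_mat_def by simp
lemma pd_mat: "M \<in> carrier_mat n n \<Longrightarrow> pos_def_mat M \<Longrightarrow> pd_on {..<n} (\<lambda>i j. M $$ (i, j))"
  unfolding pos_def_mat_def by simp

lemma pd_uniform:
  assumes "finite K" "pd_on K a"
  shows "\<exists>e>0. \<forall>x. e * (\<Sum>i\<in>K. (cmod (x i))\<^sup>2) \<le> Re (quad_form K a x)"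
proof (cases "K = {}")
  case True
  then show ?thesis by (intro exI[of _ 1]) (simp add: quad_form_def)
next
  case False
  define S where "S = PiE (UNIV::nat set) (\<lambda>_. cball (0::complex) 1) \<inter>
     ({x. \<forall>i. i \<notin> K \<longrightarrow> x i = 0} \<inter> {x. (\<Sum>i\<in>K. (cmod (x i))\<^sup>2) = 1})"
  have cl1: "closed {x::nat\<Rightarrow>complex. \<forall>i. i \<notin> K \<longrightarrow> x i = 0}"
  proof -
    have "{x::nat\<Rightarrow>complex. \<forall>i. i \<notin> K \<longrightarrow> x i = 0} = (\<Inter>i\<in>-K. {x. x i = 0})" by auto
    moreover have "closed {x::nat\<Rightarrow>complex. x i = 0}" for i
      by (intro closed_Collect_eq continuous_on_product_coordinates continuous_on_const)
    ultimately show ?thesis by auto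
  qed
  have cl2: "closed {x::nat\<Rightarrow>complex. (\<Sum>i\<in>K. (cmod (x i))\<^sup>2) = 1}"
    by (intro closed_Collect_eq cont_norm continuous_on_const)
  have cS: "compact S" unfolding S_def
    by (intro compact_Int_closed compact_ball_fun closed_Int cl1 cl2)
  obtain k where k: "k \<in> K" using False by auto
  define x1 where "x1 = (\<lambda>i. if i = k then (1::complex) else 0)"
  have "(\<Sum>i\<in>K. (cmod (x1 i))\<^sup>2) = (\<Sum>i\<in>K. if i = k then 1 else 0)"
    by (intro sum.cong) (auto simp: x1_def)
  also have "\<dots> = 1" using k assms(1) by simp
  finally have "x1 \<in> S" unfolding S_def x1_def using k
    by (auto simp: PiE_iff)
  then have "S \<noteq> {}" by auto
  then obtain x0 where x0: "x0 \<in> S" and min: "\<And>y. y \<in> S \<Longrightarrow> Re (quad_form K a x0) \<le> Re (quad_form K a y)"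
    using continuous_attains_inf[OF cS _ continuous_on_subset[OF cont_quad]] by blast
  have "\<exists>i\<in>K. x0 i \<noteq> 0"
  proof (rule ccontr)
    assume "\<not> ?thesis"
    then have "(\<Sum>i\<in>K. (cmod (x0 i))\<^sup>2) = 0" by simp
    with x0 show False unfolding S_def by simp
  qed
  then have epos: "0 < Re (quad_form K a x0)" using assms(2) unfolding pd_on_def by blast
  show ?thesis
  proof (intro exI[of _ "Re (quad_form K a x0)"] conjI allI epos)
    fix x :: "nat \<Rightarrow> complex"
    define s where "s = (\<Sum>i\<in>K. (cmod (x i))\<^sup>2)"
    have s0: "s \<ge> 0" unfolding s_def by (simp add: sum_nonneg)
    show "Re (quad_form K a x0) * (\<Sum>i\<in>K. (cmod (x i))\<^sup>2) \<le> Re (quad_form K a x)"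
    proof (cases "s = 0")
      case True
      then have "\<forall>i\<in>K. x i = 0" unfolding s_def using assms(1)
        by (simp add: sum_nonneg_eq_0_iff)
      then show ?thesis using True by (simp add: quad_zero s_def)
    next
      case False
      with s0 have sp: "s > 0" by simp
      define r where "r = sqrt s"
      have rp: "r > 0" using sp by (simp add: r_def)
      have r2: "r^2 = s" using s0 by (simp add: r_def)
      define y where "y = (\<lambda>i. if i \<in> K then x i / of_real r else 0)"
      have ny: "(\<Sum>i\<in>K. (cmod (y i))\<^sup>2) = 1"
      proof -
        have "(\<Sum>i\<in>K. (cmod (y i))\<^sup>2) = (\<Sum>i\<in>K. (cmod (x i))\<^sup>2 / r^2)"
          by (intro sum.cong) (auto simp: y_def norm_divide power_divide rp)
        also have "\<dots> = s / r^2" by (simp add: s_def sum_divide_distrib)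
        finally show ?thesis using r2 sp by simp
      qed
      have "y \<in> PiE UNIV (\<lambda>_. cball 0 1)"
      proof -
        have "cmod (y i) \<le> 1" for i
        proof (cases "i \<in> K")
          case True
          have "(cmod (y i))\<^sup>2 \<le> (\<Sum>i\<in>K. (cmod (y i))\<^sup>2)"
            by (rule member_le_sum) (use True assms(1) in auto)
          then have "(cmod (y i))\<^sup>2 \<le> 1\<^sup>2" using ny by simp
          then show ?thesis by (rule power2_le_imp_le) simp
        qed (simp add: y_def)
        then show ?thesis by (auto simp: PiE_iff)
      qed
      then have "y \<in> S" unfolding S_def using ny by (auto simp: y_def)
      then have "Re (quad_form K a x0) \<le> Re (quad_form K a y)" by (rule min)
      also have "quad_form K a y = quad_form K a (\<lambda>i. x i / of_real r)"
        by (rule quad_cong) (simp add: y_def)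
      also have "\<dots> = quad_form K a x / of_real s" by (simp add: quad_scale r2)
      finally have "Re (quad_form K a x0) \<le> Re (quad_form K a x) / s" by simp
      then have "Re (quad_form K a x0) * s \<le> Re (quad_form K a x)"
        using sp by (simp add: field_simps)
      then show ?thesis by (simp add: s_def)
    qed
  qed
qed

lemma quad_diag:
  assumes "finite K"
  shows "quad_form K (\<lambda>i j. a i j + (if i = j then c else 0)) x
     = quad_form K a x + c * of_real (\<Sum>i\<in>K. (cmod (x i))\<^sup>2)"
proof -
  have "quad_form K (\<lambda>i j. a i j + (if i = j then c else 0)) x
     = quad_form K a x + (\<Sum>i\<in>K. \<Sum>j\<in>K. cnj (x i) * (if i = j then c else 0) * x j)"
    unfolding quad_form_def by (simp add: distrib_left distrib_right sum.distrib)
  also have "(\<Sum>i\<in>K. \<Sum>j\<in>K. cnj (x i) * (if i = j then c else 0) * x j) = (\<Sum>i\<in>K. c * (cnj (x i) * x i))"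
  proof (intro sum.cong refl)
    fix i assume i: "i \<in> K"
    have "(\<Sum>j\<in>K. cnj (x i) * (if i = j then c else 0) * x j) = (\<Sum>j\<in>K. if i = j then c * (cnj (x i) * x i) else 0)"
      by (intro sum.cong) auto
    also have "\<dots> = c * (cnj (x i) * x i)" using i assms by simp
    finally show "(\<Sum>j\<in>K. cnj (x i) * (if i = j then c else 0) * x j) = c * (cnj (x i) * x i)" .
  qed
  also have "\<dots> = c * of_real (\<Sum>i\<in>K. (cmod (x i))\<^sup>2)"
    by (simp add: sum_distrib_left complex_norm_square mult.commute del: of_real_power)
  finally show ?thesis .
qed

lemma quad_add:
  "quad_form K (\<lambda>i j. a i j + b i j) x = quad_form K a x + quad_form K b x"
  unfolding quad_form_def by (simp add: distrib_left distrib_right sum.distrib)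

lemma pd_completion_exists:
  assumes g: "graph_on n E" and c: "completable n E" and B: "partial_pd n E B"
  shows "\<exists>N. N \<in> pd_completions n E B"
proof -
  let ?C = "{K. clique n E K}"
  have finC: "finite ?C" by (rule finite_subset[of _ "Pow {..<n}"]) (auto simp: clique_def)
  have "\<forall>K\<in>?C. \<exists>e>0. \<forall>x. e * (\<Sum>i\<in>K. (cmod (x i))\<^sup>2) \<le> Re (quad_form K B x)"
  proof
    fix K assume "K \<in> ?C"
    then have "K \<subseteq> {..<n}" "pd_on K B" using B
      by (auto simp: clique_def partial_pd_def)
    then show "\<exists>e>0. \<forall>x. e * (\<Sum>i\<in>K. (cmod (x i))\<^sup>2) \<le> Re (quad_form K B x)"
      using pd_uniform finite_subset[OF _ finite_lessThan] by blast
  qed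
  from bchoice[OF this] obtain f where f0: "\<forall>K\<in>?C. f K > 0 \<and> (\<forall>x. f K * (\<Sum>i\<in>K. (cmod (x i))\<^sup>2) \<le> Re (quad_form K B x))"
    by blast
  have f: "f K > 0 \<and> (\<forall>x. f K * (\<Sum>i\<in>K. (cmod (x i))\<^sup>2) \<le> Re (quad_form K B x))" if "K \<in> ?C" for K
    using f0 that by blast
  define e where "e = Min (insert 1 (f ` ?C))"
  have epos: "e > 0" unfolding e_def using finC f by (subst Min_gr_iff) auto
  have ele: "e \<le> f K" if "K \<in> ?C" for K unfolding e_def using finC that by (intro Min_le) auto
  define B' where "B' = (\<lambda>i j. B i j + (if i = j then - complex_of_real e else 0))"
  have "partial_psd n E B'"
    unfolding partial_psd_def
  proof (intro conjI allI impI)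
    have "\<forall>(i, j)\<in>E. B j i = cnj (B i j)"
      using B unfolding partial_pd_def by blast
    then show "\<forall>(i, j)\<in>E. B' j i = cnj (B' i j)"
      unfolding B'_def by auto
    fix K assume K: "clique n E K"
    then have "K \<subseteq> {..<n}" by (simp add: clique_def)
    then have fK: "finite K" by (rule finite_subset[OF _ finite_lessThan])
    have pdK: "pd_on K B" using K B by (auto simp: partial_pd_def)
    show "psd_on K B'"
      unfolding psd_on_def
    proof (intro conjI allI ballI)
      fix i j assume "i \<in> K" "j \<in> K"
      then have "B j i = cnj (B i j)" using pdK unfolding pd_on_def by blast
      then show "B' j i = cnj (B' i j)" unfolding B'_def by simp
    next
      fix x
      have "Re (quad_form K B' x) = Re (quad_form K B x) - e * (\<Sum>i\<in>K. (cmod (x i))\<^sup>2)"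
        unfolding B'_def quad_diag[OF fK] by simp
      moreover have "e * (\<Sum>i\<in>K. (cmod (x i))\<^sup>2) \<le> f K * (\<Sum>i\<in>K. (cmod (x i))\<^sup>2)"
        using ele[of K] K by (intro mult_right_mono) (auto simp: sum_nonneg)
      moreover have "f K * (\<Sum>i\<in>K. (cmod (x i))\<^sup>2) \<le> Re (quad_form K B x)"
        using f[of K] K by blast
      ultimately show "0 \<le> Re (quad_form K B' x)" by linarith
    qed
  qed
  then obtain M0 where M0: "M0 \<in> completions n E B'" "pos_semidef_mat M0"
    using c unfolding completable_def by blast
  define N where "N = Matrix.mat n n (\<lambda>(i, j). M0 $$ (i, j) + (if i = j then complex_of_real e else 0))"
  have M0c: "M0 \<in> carrier_mat n n" using M0 by (simp add: completions_def)
  have "N \<in> pd_completions n E B"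
    unfolding pd_completions_def completions_def
  proof (intro CollectI conjI)
    show "N \<in> carrier_mat n n" by (simp add: N_def)
    show "\<forall>(i, j)\<in>E. N $$ (i, j) = B i j"
    proof (intro ballI, clarify)
      fix i j assume ij: "(i, j) \<in> E"
      then have "i < n" "j < n" using g by (auto simp: graph_on_def)
      then show "N $$ (i, j) = B i j" using M0 ij by (auto simp: N_def completions_def B'_def)
    qed
    show "pos_def_mat N"
      unfolding pos_def_mat_def pd_on_def
    proof (intro conjI allI ballI impI)
      show "dim_row N = dim_col N" by (simp add: N_def)
      fix i j assume "i \<in> {..<dim_row N}" "j \<in> {..<dim_row N}"
      then have "i < n" "j < n" by (auto simp: N_def)
      moreover have "M0 $$ (j, i) = cnj (M0 $$ (i, j))"
        using psd_herm[OF psd_mat[OF M0c M0(2)], of i j] calculation by simp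
      ultimately show "N $$ (j, i) = cnj (N $$ (i, j))" by (simp add: N_def)
    next
      fix x :: "nat \<Rightarrow> complex" assume "\<exists>i\<in>{..<dim_row N}. x i \<noteq> 0"
      then obtain i where i: "i < n" "x i \<noteq> 0" by (auto simp: N_def)
      have "0 < (cmod (x i))\<^sup>2" using i by simp
      also have "\<dots> \<le> (\<Sum>i\<in>{..<n}. (cmod (x i))\<^sup>2)" by (rule member_le_sum) (use i in auto)
      finally have sp: "0 < (\<Sum>i\<in>{..<n}. (cmod (x i))\<^sup>2)" .
      have "quad_form {..<dim_row N} (\<lambda>i j. N $$ (i, j)) x
          = quad_form {..<n} (\<lambda>i j. M0 $$ (i, j) + (if i = j then complex_of_real e else 0)) x"
        unfolding quad_form_def by (intro sum.cong) (auto simp: N_def)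
      also have "\<dots> = quad_form {..<n} (\<lambda>i j. M0 $$ (i, j)) x + complex_of_real e * of_real (\<Sum>i\<in>{..<n}. (cmod (x i))\<^sup>2)"
        by (rule quad_diag) simp
      finally have "Re (quad_form {..<dim_row N} (\<lambda>i j. N $$ (i, j)) x)
          = Re (quad_form {..<n} (\<lambda>i j. M0 $$ (i, j)) x) + e * (\<Sum>i\<in>{..<n}. (cmod (x i))\<^sup>2)" by simp
      moreover have "0 \<le> Re (quad_form {..<n} (\<lambda>i j. M0 $$ (i, j)) x)"
        using psd_nonneg[OF psd_mat[OF M0c M0(2)]] .
      moreover have "0 < e * (\<Sum>i\<in>{..<n}. (cmod (x i))\<^sup>2)" using epos sp by simp
      ultimately show "0 < Re (quad_form {..<dim_row N} (\<lambda>i j. N $$ (i, j)) x)" by linarith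
    qed
  qed
  then show ?thesis by blast
qed

theorem lemma5p4:
  fixes n :: nat and E :: "(nat \<times> nat) set" and A B :: "nat \<Rightarrow> nat \<Rightarrow> complex"
  assumes "graph_on n E" and "completable n E"
    and "partial_pd n E A" and "partial_pd n E B"
  shows "pd_completions n E (\<lambda>i j. A i j - B i j)
           \<subseteq> {M - N | M N. M \<in> pd_completions n E A \<and> N \<in> pd_completions n E B}"
proof
  fix P assume P: "P \<in> pd_completions n E (\<lambda>i j. A i j - B i j)"
  obtain N where N: "N \<in> pd_completions n E B"
    using pd_completion_exists[OF assms(1,2,4)] by blast
  have Pc: "P \<in> carrier_mat n n" and Nc: "N \<in> carrier_mat n n"
    using P N by (auto simp: pd_completions_def completions_def)
  have Ppd: "pos_def_mat P" and Npd: "pos_def_mat N"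
    using P N by (auto simp: pd_completions_def)
  have "P + N \<in> pd_completions n E A"
    unfolding pd_completions_def completions_def
  proof (intro CollectI conjI)
    show "P + N \<in> carrier_mat n n" using Pc Nc by simp
    show "\<forall>(i, j)\<in>E. (P + N) $$ (i, j) = A i j"
    proof (intro ballI, clarify)
      fix i j assume ij: "(i, j) \<in> E"
      then have "i < n" "j < n" using assms(1) by (auto simp: graph_on_def)
      moreover have "P $$ (i, j) = A i j - B i j" using P ij
        by (auto simp: pd_completions_def completions_def)
      moreover have "N $$ (i, j) = B i j" using N ij
        by (auto simp: pd_completions_def completions_def)
      ultimately show "(P + N) $$ (i, j) = A i j" using Pc Nc by simp
    qed
    show "pos_def_mat (P + N)"
      unfolding pos_def_mat_def pd_on_def
    proof (intro conjI allI ballI impI)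
      show "dim_row (P + N) = dim_col (P + N)" using Pc Nc by simp
      fix i j assume "i \<in> {..<dim_row (P + N)}" "j \<in> {..<dim_row (P + N)}"
      then have ij: "i < n" "j < n" using Pc Nc by auto
      have "P $$ (j, i) = cnj (P $$ (i, j))" using pd_herm[OF pd_mat[OF Pc Ppd], of i j] ij by simp
      moreover have "N $$ (j, i) = cnj (N $$ (i, j))" using pd_herm[OF pd_mat[OF Nc Npd], of i j] ij by simp
      ultimately show "(P + N) $$ (j, i) = cnj ((P + N) $$ (i, j))" using ij Pc Nc by simp
    next
      fix x :: "nat \<Rightarrow> complex" assume x: "\<exists>i\<in>{..<dim_row (P + N)}. x i \<noteq> 0"
      have "quad_form {..<dim_row (P + N)} (\<lambda>i j. (P + N) $$ (i, j)) x
          = quad_form {..<n} (\<lambda>i j. P $$ (i, j) + N $$ (i, j)) x"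
        unfolding quad_form_def using Pc Nc by (intro sum.cong) auto
      also have "\<dots> = quad_form {..<n} (\<lambda>i j. P $$ (i, j)) x + quad_form {..<n} (\<lambda>i j. N $$ (i, j)) x"
        by (rule quad_add)
      finally have eq: "Re (quad_form {..<dim_row (P + N)} (\<lambda>i j. (P + N) $$ (i, j)) x)
          = Re (quad_form {..<n} (\<lambda>i j. P $$ (i, j)) x) + Re (quad_form {..<n} (\<lambda>i j. N $$ (i, j)) x)" by simp
      have "0 < Re (quad_form {..<n} (\<lambda>i j. P $$ (i, j)) x)"
        using pd_pos[OF pd_mat[OF Pc Ppd]] x Pc Nc by simp
      moreover have "0 < Re (quad_form {..<n} (\<lambda>i j. N $$ (i, j)) x)"
        using pd_pos[OF pd_mat[OF Nc Npd]] x Pc Nc by simp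
      ultimately show "0 < Re (quad_form {..<dim_row (P + N)} (\<lambda>i j. (P + N) $$ (i, j)) x)"
        using eq by linarith
    qed
  qed
  moreover have "P = (P + N) - N"
    using Pc Nc by (intro eq_matI) auto
  ultimately show "P \<in> {M - N | M N. M \<in> pd_completions n E A \<and> N \<in> pd_completions n E B}"
    using N by blast
qed

end
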